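(* Let $\mathbb{G}=(\mathcal{V},\mathcal{E})$ be a connected undirected graph on $\mathcal{V}=\{1,\dots,m\}$ with $\bar m$ edges and neighbor sets $\mathcal{N}_i$ ($i\notin\mathcal{N}_i$). For each edge $(i,j)$, in either order, let $A_{ij}\in\mathbb{R}^{d_{ij}\times n}$ have full row rank and $\boldsymbol{b}_{ij}\in\mathbb{R}^{d_{ij}}$, with $A_{ij}=A_{ji}$ and $\boldsymbol{b}_{ij}=-\boldsymbol{b}_{ji}$. Assume there exist $\boldsymbol{x}_1,\dots,\boldsymbol{x}_m\in\mathbb{R}^n$ satisfying the edge agreements $A_{ij}(\boldsymbol{x}_i-\boldsymbol{x}_j)=\boldsymbol{b}_{ij}$ for all $(i,j)\in\mathcal{E}$, and that $\ker\bar H'\cap\operatorname{image}\bar P=\{\boldsymbol{0}\}$. Consider the continuous-time update $$\dot{\boldsymbol{x}}_i(t)=-\sum_{j\in\mathcal{N}_i}P_{ij}\big(\boldsymbol{x}_i(t)-\boldsymbol{x}_j(t)-\bar{\boldsymbol{b}}_{ij}\big),\qquad i\in\mathcal{V}.$$ Then each $\boldsymbol{x}_i(t)$ converges exponentially fast to a constant vector $\boldsymbol{x}_i^*$, and $\boldsymbol{x}_1^*,\dots,\boldsymbol{x}_m^*$ satisfy $A_{ij}(\boldsymbol{x}_i^*-\boldsymbol{x}_j^* )=\boldsymbol{b}_{ij}$ for all $(i,j)\in\mathcal{E}$.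
   Context: $'$ denotes transpose. $P_{ij}=A_{ij}'(A_{ij}A_{ij}')^{-1}A_{ij}$, $\bar{\boldsymbol{b}}_{ij}=A_{ij}'(A_{ij}A_{ij}')^{-1}\boldsymbol{b}_{ij}$. With a fixed enumeration/orientation of edges $(i_1,j_1),\dots,(i_{\bar m},j_{\bar m})$: $\bar P=\mathrm{diag}\{P_{i_1j_1},\dots,P_{i_{\bar m}j_{\bar m}}\}\in\mathbb{R}^{\bar mn\times\bar mn}$ (block diagonal), $H\in\mathbb{R}^{\bar m\times m}$ the oriented incidence matrix whose $l$-th row has $1$ in column $i_l$, $-1$ in column $j_l$, $0$ elsewhere, and $\bar H=H\otimes I_n$. *)

theory Defs
  imports Complex_Main "Jordan_Normal_Form.Matrix"
begin

definition full_row_rank :: "real mat \<Rightarrow> bool" where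
  "full_row_rank A \<longleftrightarrow> (\<forall>c \<in> carrier_vec (dim_row A).
       transpose_mat A *\<^sub>v c = 0\<^sub>v (dim_col A) \<longrightarrow> c = 0\<^sub>v (dim_row A))"

definition minv :: "real mat \<Rightarrow> real mat" where
  "minv M = (SOME B. B \<in> carrier_mat (dim_row M) (dim_row M) \<and>
                     M * B = 1\<^sub>m (dim_row M) \<and> B * M = 1\<^sub>m (dim_row M))"

definition projP :: "real mat \<Rightarrow> real mat" where
  "projP A = transpose_mat A * minv (A * transpose_mat A) * A"

definition bbar :: "real mat \<Rightarrow> real vec \<Rightarrow> real vec" where
  "bbar A b = transpose_mat A *\<^sub>v (minv (A * transpose_mat A) *\<^sub>v b)"

definition vnorm :: "real vec \<Rightarrow> real" where
  "vnorm v = sqrt (\<Sum>k<dim_vec v. (v $ k)^2)"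

definition connected_ugraph :: "nat \<Rightarrow> (nat \<times> nat) set \<Rightarrow> bool" where
  "connected_ugraph m E \<longleftrightarrow> E \<subseteq> {0..<m} \<times> {0..<m} \<and> sym E \<and> (\<forall>i. (i,i) \<notin> E) \<and>
      (\<forall>i<m. \<forall>j<m. (i,j) \<in> E\<^sup>*)"

text \<open>A fixed enumeration/orientation of the undirected edges: each undirected
  edge appears exactly once, in one orientation.\<close>
definition edge_enum :: "(nat \<times> nat) set \<Rightarrow> (nat \<times> nat) list \<Rightarrow> bool" where
  "edge_enum E es \<longleftrightarrow> distinct es \<and> set es \<subseteq> E \<and>
     (\<forall>(i,j) \<in> E. (i,j) \<in> set es \<or> (j,i) \<in> set es) \<and>
     (\<forall>(i,j) \<in> set es. (j,i) \<notin> set es)"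

definition incH :: "nat \<Rightarrow> (nat \<times> nat) list \<Rightarrow> real mat" where
  "incH m es = mat (length es) m (\<lambda>(l,v).
      if v = fst (es ! l) then 1 else if v = snd (es ! l) then -1 else 0)"

text \<open>Hbar = H \<otimes> I_n.\<close>
definition Hbar :: "nat \<Rightarrow> nat \<Rightarrow> (nat \<times> nat) list \<Rightarrow> real mat" where
  "Hbar n m es = mat (length es * n) (m * n) (\<lambda>(r,c).
      if r mod n = c mod n then incH m es $$ (r div n, c div n) else 0)"

text \<open>Pbar = diag{P_{i_1 j_1}, ..., P_{i_mbar j_mbar}} (block diagonal).\<close>
definition Pbar :: "nat \<Rightarrow> (nat \<Rightarrow> nat \<Rightarrow> real mat) \<Rightarrow> (nat \<times> nat) list \<Rightarrow> real mat" where
  "Pbar n A es = mat (length es * n) (length es * n) (\<lambda>(r,c).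
      if r div n = c div n
      then projP (A (fst (es ! (r div n))) (snd (es ! (r div n)))) $$ (r mod n, c mod n)
      else 0)"

end

theory Submission
  imports Defs "Jordan_Normal_Form.Determinant"
begin

lemma self_sprod_nonneg: "0 \<le> (v::real vec) \<bullet> v"
  unfolding scalar_prod_def by (auto intro: sum_nonneg)

lemma self_sprod_zero: assumes "v \<in> carrier_vec k" "(v::real vec) \<bullet> v = 0" shows "v = 0\<^sub>v k"
proof -
  have "\<forall>i\<in>{0..<k}. v $ i * v $ i = 0"
    using assms unfolding scalar_prod_def
    by (subst sum_nonneg_eq_0_iff[symmetric]) auto
  then show ?thesis using assms by (intro eq_vecI) auto
qed

lemma inv_exists:
  assumes M: "(M::real mat) \<in> carrier_mat k k"
    and inj: "\<And>v. v \<in> carrier_vec k \<Longrightarrow> M *\<^sub>v v = 0\<^sub>v k \<Longrightarrow> v = 0\<^sub>v k"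
  shows "\<exists>B. B \<in> carrier_mat k k \<and> M * B = 1\<^sub>m k \<and> B * M = 1\<^sub>m k"
proof -
  have "det M \<noteq> 0" using det_0_iff_vec_prod_zero[OF M] inj by blast
  from det_non_zero_imp_unit[OF M this, of "()"]
  show ?thesis unfolding Units_def ring_mat_def by auto
qed

lemma minv_props:
  assumes M: "(M::real mat) \<in> carrier_mat k k"
    and inj: "\<And>v. v \<in> carrier_vec k \<Longrightarrow> M *\<^sub>v v = 0\<^sub>v k \<Longrightarrow> v = 0\<^sub>v k"
  shows "minv M \<in> carrier_mat k k" "M * minv M = 1\<^sub>m k" "minv M * M = 1\<^sub>m k"
proof -
  have d: "dim_row M = k" using M by auto
  have "\<exists>B. B \<in> carrier_mat (dim_row M) (dim_row M) \<and> M * B = 1\<^sub>m (dim_row M) \<and> B * M = 1\<^sub>m (dim_row M)"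
    using inv_exists[OF M inj] d by simp
  from someI_ex[OF this] show "minv M \<in> carrier_mat k k" "M * minv M = 1\<^sub>m k" "minv M * M = 1\<^sub>m k"
    unfolding minv_def d by auto
qed

lemma dot_bound:
  fixes a b :: "nat \<Rightarrow> real"
  shows "(\<Sum>j<c. a j * b j)^2 \<le> (\<Sum>j<c. \<bar>a j\<bar>)^2 * (\<Sum>j<c. (b j)^2)"
proof -
  define s where "s = sqrt (\<Sum>j<c. (b j)^2)"
  have s0: "0 \<le> s" unfolding s_def by (auto intro: sum_nonneg)
  have bj: "\<bar>b j\<bar> \<le> s" if "j < c" for j
  proof -
    have "(b j)^2 \<le> (\<Sum>j<c. (b j)^2)"
      using that by (intro member_le_sum) auto
    then have "sqrt ((b j)^2) \<le> s" unfolding s_def by (rule real_sqrt_le_mono)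
    then show ?thesis by simp
  qed
  have "\<bar>\<Sum>j<c. a j * b j\<bar> \<le> (\<Sum>j<c. \<bar>a j\<bar> * s)"
    by (rule order_trans[OF sum_abs]) (auto intro!: sum_mono mult_left_mono bj simp: abs_mult)
  also have "\<dots> = (\<Sum>j<c. \<bar>a j\<bar>) * s" by (simp add: sum_distrib_right)
  finally have h: "\<bar>\<Sum>j<c. a j * b j\<bar> \<le> (\<Sum>j<c. \<bar>a j\<bar>) * s" .
  have "(\<Sum>j<c. a j * b j)^2 \<le> ((\<Sum>j<c. \<bar>a j\<bar>) * s)^2"
    using h abs_le_square_iff by fastforce
  also have "\<dots> = (\<Sum>j<c. \<bar>a j\<bar>)^2 * (\<Sum>j<c. (b j)^2)"
    unfolding power_mult_distrib s_def by (simp add: sum_nonneg)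
  finally show ?thesis .
qed

lemma frob_bound:
  assumes M: "(M::real mat) \<in> carrier_mat r c" and v: "v \<in> carrier_vec c"
  shows "(M *\<^sub>v v) \<bullet> (M *\<^sub>v v) \<le> (\<Sum>i<r. (\<Sum>j<c. \<bar>M $$ (i,j)\<bar>)^2) * (v \<bullet> v)"
proof -
  have "(M *\<^sub>v v) \<bullet> (M *\<^sub>v v) = (\<Sum>i<r. (\<Sum>j<c. M $$ (i,j) * v $ j)^2)"
    using M v by (simp add: scalar_prod_def mult_mat_vec_def row_def power2_eq_square atLeast0LessThan)
  also have "\<dots> \<le> (\<Sum>i<r. (\<Sum>j<c. \<bar>M $$ (i,j)\<bar>)^2 * (\<Sum>j<c. (v $ j)^2))"
    by (rule sum_mono) (rule dot_bound)
  also have "\<dots> = (\<Sum>i<r. (\<Sum>j<c. \<bar>M $$ (i,j)\<bar>)^2) * (v \<bullet> v)"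
    using v by (simp add: sum_distrib_right scalar_prod_def power2_eq_square atLeast0LessThan)
  finally show ?thesis .
qed

lemma mat_vec_zero[simp]: "A \<in> carrier_mat r c \<Longrightarrow> (A::real mat) *\<^sub>v 0\<^sub>v c = 0\<^sub>v r"
  by (intro eq_vecI) (auto simp: scalar_prod_def)

lemma gram_quad:
  assumes X: "(X::real mat) \<in> carrier_mat p k" and v: "v \<in> carrier_vec k"
  shows "v \<bullet> (transpose_mat X *\<^sub>v (X *\<^sub>v v)) = (X *\<^sub>v v) \<bullet> (X *\<^sub>v v)"
proof -
  have "(transpose_mat X *\<^sub>v (X *\<^sub>v v)) \<bullet> v = (X *\<^sub>v v) \<bullet> (X *\<^sub>v v)"
    using X v by (intro transpose_vec_mult_scalar) auto
  moreover have "v \<bullet> (transpose_mat X *\<^sub>v (X *\<^sub>v v)) = (transpose_mat X *\<^sub>v (X *\<^sub>v v)) \<bullet> v"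
    using X v by (intro comm_scalar_prod[of _ k]) auto
  ultimately show ?thesis by simp
qed

lemma coercive:
  assumes Ht: "(Ht::real mat) \<in> carrier_mat p N" and Pb: "Pb \<in> carrier_mat N N"
    and ker: "\<forall>v \<in> carrier_vec N. (\<exists>z \<in> carrier_vec N. v = Pb *\<^sub>v z) \<and> Ht *\<^sub>v v = 0\<^sub>v p \<longrightarrow> v = 0\<^sub>v N"
  shows "\<exists>C>0. \<forall>u\<in>carrier_vec N. Pb *\<^sub>v u = u \<longrightarrow> u \<bullet> u \<le> C * ((Ht *\<^sub>v u) \<bullet> (Ht *\<^sub>v u))"
proof -
  define R where "R = 1\<^sub>m N - Pb"
  have R: "R \<in> carrier_mat N N" using Pb unfolding R_def by auto
  define Q where "Q = transpose_mat Ht * Ht + transpose_mat R * R"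
  have Q: "Q \<in> carrier_mat N N" using Ht R unfolding Q_def by auto
  have Rv: "R *\<^sub>v v = v - Pb *\<^sub>v v" if "v \<in> carrier_vec N" for v
    using that Pb unfolding R_def by (subst minus_mult_distrib_mat_vec[of _ N N]) auto
  have inj: "v = 0\<^sub>v N" if v: "v \<in> carrier_vec N" and Qv: "Q *\<^sub>v v = 0\<^sub>v N" for v
  proof -
    have "Q *\<^sub>v v = (transpose_mat Ht * Ht) *\<^sub>v v + (transpose_mat R * R) *\<^sub>v v"
      unfolding Q_def using Ht R v by (subst add_mult_distrib_mat_vec[of _ N N]) auto
    then have "Q *\<^sub>v v = transpose_mat Ht *\<^sub>v (Ht *\<^sub>v v) + transpose_mat R *\<^sub>v (R *\<^sub>v v)"
      using Ht R v by (simp add: assoc_mult_mat_vec)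
    then have "v \<bullet> (Q *\<^sub>v v) = v \<bullet> (transpose_mat Ht *\<^sub>v (Ht *\<^sub>v v)) + v \<bullet> (transpose_mat R *\<^sub>v (R *\<^sub>v v))"
      using Ht R v by (simp add: scalar_prod_add_distrib[of _ N])
    then have "0 = v \<bullet> (transpose_mat Ht *\<^sub>v (Ht *\<^sub>v v)) + v \<bullet> (transpose_mat R *\<^sub>v (R *\<^sub>v v))"
      using Qv v by simp
    then have "0 = (Ht *\<^sub>v v) \<bullet> (Ht *\<^sub>v v) + (R *\<^sub>v v) \<bullet> (R *\<^sub>v v)"
      using gram_quad[OF Ht v] gram_quad[OF R v] by simp
    then have a: "(Ht *\<^sub>v v) \<bullet> (Ht *\<^sub>v v) = 0" and b: "(R *\<^sub>v v) \<bullet> (R *\<^sub>v v) = 0"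
      using self_sprod_nonneg[of "Ht *\<^sub>v v"] self_sprod_nonneg[of "R *\<^sub>v v"] by linarith+
    have "Ht *\<^sub>v v = 0\<^sub>v p" using self_sprod_zero[OF _ a, of p] mult_mat_vec_carrier[OF Ht v] by auto
    moreover have "R *\<^sub>v v = 0\<^sub>v N" using self_sprod_zero[OF _ b, of N] mult_mat_vec_carrier[OF R v] by auto
    then have h: "v - Pb *\<^sub>v v = 0\<^sub>v N" using Rv[OF v] by simp
    have "v = Pb *\<^sub>v v"
    proof (rule eq_vecI)
      fix i assume "i < dim_vec (Pb *\<^sub>v v)"
      then have i: "i < N" using Pb by simp
      show "v $ i = (Pb *\<^sub>v v) $ i"
        using arg_cong[OF h, of "\<lambda>w. w $ i"] i v Pb by simp
    qed (use v Pb in simp)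
    ultimately show ?thesis using ker v by blast
  qed
  obtain B where B: "B \<in> carrier_mat N N" "Q * B = 1\<^sub>m N" "B * Q = 1\<^sub>m N"
    using inv_exists[OF Q inj] by blast
  define M where "M = B * transpose_mat Ht"
  have M: "M \<in> carrier_mat N p" using B Ht unfolding M_def by auto
  define K where "K = (\<Sum>i<N. (\<Sum>j<p. \<bar>M $$ (i,j)\<bar>)^2)"
  have K0: "0 \<le> K" unfolding K_def by (auto intro: sum_nonneg)
  show ?thesis
  proof (intro exI[of _ "K+1"] conjI ballI impI)
    show "0 < K + 1" using K0 by simp
    fix u assume u: "u \<in> carrier_vec N" and Pu: "Pb *\<^sub>v u = u"
    have "R *\<^sub>v u = 0\<^sub>v N" using Rv[OF u] Pu u by simp
    then have "(transpose_mat R * R) *\<^sub>v u = 0\<^sub>v N"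
      using R u by (simp add: assoc_mult_mat_vec)
    then have Qu: "Q *\<^sub>v u = transpose_mat Ht *\<^sub>v (Ht *\<^sub>v u)"
      unfolding Q_def using Ht R u by (subst add_mult_distrib_mat_vec[of _ N N]) (auto simp: assoc_mult_mat_vec)
    have "B *\<^sub>v (Q *\<^sub>v u) = (B * Q) *\<^sub>v u"
      using B Q u by (intro assoc_mult_mat_vec[symmetric]) auto
    then have "u = B *\<^sub>v (Q *\<^sub>v u)" using B(3) u by simp
    also have "\<dots> = M *\<^sub>v (Ht *\<^sub>v u)"
      unfolding Qu M_def using B Ht u by (simp add: assoc_mult_mat_vec)
    finally have uu: "u = M *\<^sub>v (Ht *\<^sub>v u)" .
    have "u \<bullet> u \<le> K * ((Ht *\<^sub>v u) \<bullet> (Ht *\<^sub>v u))"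
      unfolding K_def by (subst (1 2) uu, rule frob_bound[OF M]) (use Ht u in auto)
    also have "\<dots> \<le> (K+1) * ((Ht *\<^sub>v u) \<bullet> (Ht *\<^sub>v u))"
      using self_sprod_nonneg[of "Ht *\<^sub>v u"] by (simp add: mult_right_mono)
    finally show "u \<bullet> u \<le> (K+1) * ((Ht *\<^sub>v u) \<bullet> (Ht *\<^sub>v u))" .
  qed
qed

lemma AAt_inj:
  assumes A: "(A::real mat) \<in> carrier_mat d n" and r: "full_row_rank A"
    and v: "v \<in> carrier_vec d" and z: "(A * transpose_mat A) *\<^sub>v v = 0\<^sub>v d"
  shows "v = 0\<^sub>v d"
proof -
  have At: "transpose_mat A \<in> carrier_mat n d" using A by auto
  have "v \<bullet> (transpose_mat (transpose_mat A) *\<^sub>v (transpose_mat A *\<^sub>v v)) =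
        (transpose_mat A *\<^sub>v v) \<bullet> (transpose_mat A *\<^sub>v v)"
    by (rule gram_quad[OF At v])
  moreover have "transpose_mat (transpose_mat A) *\<^sub>v (transpose_mat A *\<^sub>v v) = 0\<^sub>v d"
    using z A v by (simp add: assoc_mult_mat_vec)
  ultimately have "(transpose_mat A *\<^sub>v v) \<bullet> (transpose_mat A *\<^sub>v v) = 0" using v by simp
  then have "transpose_mat A *\<^sub>v v = 0\<^sub>v n"
    using self_sprod_zero[of _ n] mult_mat_vec_carrier[OF At v] by auto
  then show ?thesis using r v A unfolding full_row_rank_def by auto
qed

lemma proj_facts:
  assumes A: "(A::real mat) \<in> carrier_mat d n" and r: "full_row_rank A"
  shows "projP A \<in> carrier_mat n n" "projP A * projP A = projP A"
    "transpose_mat (projP A) = projP A" "A * projP A = A"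
    "\<And>b. b \<in> carrier_vec d \<Longrightarrow> A *\<^sub>v bbar A b = b"
    "\<And>b. b \<in> carrier_vec d \<Longrightarrow> bbar A (- b) = - bbar A b"
proof -
  define M where "M = A * transpose_mat A"
  have At: "transpose_mat A \<in> carrier_mat n d" using A by auto
  have M: "M \<in> carrier_mat d d" using A unfolding M_def by auto
  note mi = minv_props[OF M AAt_inj[OF A r, folded M_def]]
  define Mi where "Mi = minv M"
  have Mi: "Mi \<in> carrier_mat d d" "M * Mi = 1\<^sub>m d" "Mi * M = 1\<^sub>m d" using mi unfolding Mi_def by auto
  have Mt: "transpose_mat M = M" unfolding M_def using A by (simp add: transpose_mult[OF A At])
  have MiT: "transpose_mat Mi = Mi"
  proof -
    have "transpose_mat (M * Mi) = transpose_mat Mi * transpose_mat M"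
      by (rule transpose_mult[OF M Mi(1)])
    then have TMi: "transpose_mat Mi * M = 1\<^sub>m d" using Mi(2) Mt by simp
    have "transpose_mat Mi * M * Mi = transpose_mat Mi * (M * Mi)"
      by (rule assoc_mult_mat[OF _ M Mi(1)]) (use Mi(1) in simp)
    then show ?thesis using TMi Mi by simp
  qed
  have P: "projP A = transpose_mat A * Mi * A" unfolding projP_def Mi_def M_def ..
  have TM: "transpose_mat A * Mi \<in> carrier_mat n d" using At Mi by auto
  show Pc: "projP A \<in> carrier_mat n n" unfolding P using A Mi by auto
  have AP: "A * projP A = A"
  proof -
    have "A * (transpose_mat A * Mi * A) = A * (transpose_mat A * (Mi * A))"
      by (simp only: assoc_mult_mat[OF At Mi(1) A])
    also have "\<dots> = (A * transpose_mat A) * (Mi * A)"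
      by (rule assoc_mult_mat[symmetric, OF A At mult_carrier_mat[OF Mi(1) A]])
    also have "\<dots> = (M * Mi) * A" 
      unfolding M_def[symmetric] by (rule assoc_mult_mat[symmetric, OF M Mi(1) A])
    also have "\<dots> = A" using Mi A by simp
    finally show ?thesis unfolding P .
  qed
  show "A * projP A = A" by (rule AP)
  show "projP A * projP A = projP A"
  proof -
    have "projP A * projP A = (transpose_mat A * Mi) * A * projP A" by (simp only: P)
    also have "\<dots> = (transpose_mat A * Mi) * (A * projP A)"
      by (rule assoc_mult_mat[OF TM A Pc])
    finally show ?thesis using AP P by simp
  qed
  show "transpose_mat (projP A) = projP A"
  proof -
    have "transpose_mat (transpose_mat A * Mi * A) = transpose_mat A * transpose_mat (transpose_mat A * Mi)"
      by (rule transpose_mult[OF TM A])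
    also have "transpose_mat (transpose_mat A * Mi) = transpose_mat Mi * transpose_mat (transpose_mat A)"
      by (rule transpose_mult[OF At Mi(1)])
    also have "transpose_mat A * (transpose_mat Mi * transpose_mat (transpose_mat A)) = transpose_mat A * (Mi * A)"
      using MiT by simp
    also have "\<dots> = transpose_mat A * Mi * A" by (rule assoc_mult_mat[symmetric, OF At Mi(1) A])
    finally show ?thesis unfolding P .
  qed
  fix b :: "real vec" assume b: "b \<in> carrier_vec d"
  show "A *\<^sub>v bbar A b = b"
  proof -
    have "A *\<^sub>v bbar A b = (M * Mi) *\<^sub>v b"
      unfolding bbar_def Mi_def[symmetric] M_def[symmetric]
    proof -
      have "A *\<^sub>v (transpose_mat A *\<^sub>v (Mi *\<^sub>v b)) = M *\<^sub>v (Mi *\<^sub>v b)"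
        unfolding M_def using A At Mi b by (subst assoc_mult_mat_vec[of _ d n]) auto
      also have "\<dots> = (M * Mi) *\<^sub>v b" using M Mi b by (subst assoc_mult_mat_vec[of _ d d]) auto
      finally show "A *\<^sub>v (transpose_mat A *\<^sub>v (Mi *\<^sub>v b)) = (M * Mi) *\<^sub>v b" .
    qed
    then show ?thesis using Mi b by simp
  qed
  show "bbar A (- b) = - bbar A b"
  proof -
    have "Mi *\<^sub>v (- b) = - (Mi *\<^sub>v b)" using Mi b by (intro eq_vecI) (auto simp: scalar_prod_def sum_negf)
    moreover have "transpose_mat A *\<^sub>v (- (Mi *\<^sub>v b)) = - (transpose_mat A *\<^sub>v (Mi *\<^sub>v b))"
      using Mi b At by (intro eq_vecI) (auto simp: scalar_prod_def sum_negf)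
    ultimately show ?thesis unfolding bbar_def Mi_def[symmetric] M_def[symmetric] by simp
  qed
qed

lemma deriv_nonpos_mono:
  fixes g g' :: "real \<Rightarrow> real"
  assumes d: "\<And>t. 0 \<le> t \<Longrightarrow> (g has_real_derivative g' t) (at t within {0..})"
    and n: "\<And>t. 0 \<le> t \<Longrightarrow> g' t \<le> 0" and s: "0 \<le> s" and st: "s \<le> t"
  shows "g t \<le> g s"
proof (rule DERIV_nonpos_imp_decreasing_open[OF st])
  fix y assume y: "s < y" "y < t"
  have "(g has_real_derivative g' y) (at y within {0<..})"
    using d[of y] y s by (auto intro: DERIV_subset)
  then have "(g has_real_derivative g' y) (at y)"
    using y s by (subst (asm) at_within_open) auto
  then show "\<exists>z. (g has_real_derivative z) (at y) \<and> z \<le> 0" using n[of y] y s by auto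
next
  show "continuous_on {s..t} g"
  proof (rule continuous_on_subset)
    show "continuous_on {0..} g"
      unfolding continuous_on_eq_continuous_within
      using d by (auto intro: DERIV_continuous)
  qed (use s in auto)
qed

lemma exp_decay_limit:
  fixes f f' :: "real \<Rightarrow> real"
  assumes d: "\<And>t. 0 \<le> t \<Longrightarrow> (f has_real_derivative f' t) (at t within {0..})"
    and b: "\<And>t. 0 \<le> t \<Longrightarrow> \<bar>f' t\<bar> \<le> G * exp (- \<beta> * t)" and \<beta>: "0 < \<beta>"
  shows "\<exists>L. \<forall>t\<ge>0. \<bar>f t - L\<bar> \<le> (G / \<beta>) * exp (- \<beta> * t)"
proof -
  define c where "c = G / \<beta>"
  define g where "g t = f t + c * exp (- \<beta> * t)" for t
  define h where "h t = f t - c * exp (- \<beta> * t)" for t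
  have dexp: "((\<lambda>t. c * exp (- \<beta> * t)) has_real_derivative (- G * exp (- \<beta> * t))) (at t within {0..})" for t
    using \<beta> unfolding c_def by (auto intro!: derivative_eq_intros)
  have gd: "(g has_real_derivative (f' t - G * exp (- \<beta> * t))) (at t within {0..})" if "0 \<le> t" for t
    unfolding g_def using DERIV_add[OF d[OF that] dexp[of t]] by simp
  have hd: "(h has_real_derivative (f' t + G * exp (- \<beta> * t))) (at t within {0..})" if "0 \<le> t" for t
    unfolding h_def using DERIV_diff[OF d[OF that] dexp[of t]] by simp
  have gmono: "g t \<le> g s" if "0 \<le> s" "s \<le> t" for s t
    by (rule deriv_nonpos_mono[OF gd _ that]) (use b in \<open>auto simp: abs_le_iff\<close>)
  have hmono: "h s \<le> h t" if "0 \<le> s" "s \<le> t" for s t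
  proof -
    have "(\<lambda>t. - h t) t \<le> (\<lambda>t. - h t) s"
      by (rule deriv_nonpos_mono[OF DERIV_minus[OF hd] _ that]) (use b in \<open>auto simp: abs_le_iff\<close>)
    then show ?thesis by simp
  qed
  have hg: "h t \<le> g t" if "0 \<le> t" for t
  proof -
    have "0 \<le> G" using b[of 0] by (smt (verit) exp_zero mult.commute mult_cancel_left1 mult_zero_left)
    then have "0 \<le> c" unfolding c_def using \<beta> by simp
    then show ?thesis unfolding g_def h_def by simp
  qed
  have hs: "h t \<le> g s" if "0 \<le> t" "0 \<le> s" for s t
  proof (cases "t \<le> s")
    case True then show ?thesis using hmono[of t s] hg[of s] that by linarith
  next
    case False then show ?thesis using gmono[of s t] hg[of t] that by linarith
  qed
  define L where "L = Inf (g ` {0..})"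
  have bdd: "bdd_below (g ` {0..})" using hs[of 0] by (auto intro!: bdd_belowI[of _ "h 0"])
  show ?thesis
  proof (intro exI[of _ L] allI impI)
    fix t :: real assume t: "0 \<le> t"
    have "L \<le> g t" unfolding L_def using t bdd by (intro cInf_lower) auto
    moreover have "h t \<le> L" unfolding L_def using t by (intro cInf_greatest) (auto intro: hs)
    ultimately show "\<bar>f t - L\<bar> \<le> (G / \<beta>) * exp (- \<beta> * t)"
      unfolding g_def h_def c_def by (simp add: abs_le_iff)
  qed
qed

lemma decay_zero:
  fixes z :: real
  assumes "\<And>t. 0 \<le> t \<Longrightarrow> \<bar>z\<bar> \<le> Z * exp (- \<beta> * t)" and "0 < \<beta>"
  shows "z = 0"
proof (rule ccontr)
  assume z: "z \<noteq> 0"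
  have "((\<lambda>t. Z * exp (- \<beta> * t)) \<longlongrightarrow> Z * 0) at_top"
    by (intro tendsto_intros filterlim_compose[OF exp_at_bot] filterlim_tendsto_neg_mult_at_bot[OF tendsto_const]
        filterlim_ident) (use assms in auto)
  then have "\<forall>\<^sub>F t in at_top. Z * exp (- \<beta> * t) < \<bar>z\<bar>"
    using z by (intro order_tendstoD) auto
  moreover have "\<forall>\<^sub>F t in at_top. (0::real) \<le> t" by (rule eventually_ge_at_top)
  ultimately have "\<forall>\<^sub>F t in at_top. Z * exp (- \<beta> * t) < \<bar>z\<bar> \<and> (0::real) \<le> t"
    by (rule eventually_conj)
  then obtain N where "\<forall>t\<ge>N. Z * exp (- \<beta> * t) < \<bar>z\<bar> \<and> (0::real) \<le> t"
    unfolding eventually_at_top_linorder by blast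
  then show False using assms(1)[of N] by force
qed

lemma sum_block:
  fixes f :: "nat \<Rightarrow> real"
  shows "(\<Sum>r<L*n. f r) = (\<Sum>l<L. \<Sum>k<n. f (l*n+k))"
proof (induction L)
  case 0 then show ?case by simp
next
  case (Suc L)
  have "(\<Sum>r<Suc L*n. f r) = (\<Sum>r\<in>{0..<L*n}. f r) + (\<Sum>r\<in>{L*n..<n+L*n}. f r)"
    by (simp add: atLeast0LessThan[symmetric] sum.atLeastLessThan_concat add.commute)
  also have "(\<Sum>r\<in>{L*n..<n+L*n}. f r) = (\<Sum>k<n. f (L*n+k))"
    using sum.shift_bounds_nat_ivl[of f 0 "L*n" n] by (simp add: atLeast0LessThan add.commute)
  finally show ?case using Suc by (simp add: atLeast0LessThan)
qed

lemma sum_nth_set: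
  assumes "distinct es"
  shows "(\<Sum>l<length es. g (es ! l)) = (\<Sum>p\<in>set es. g p)"
  using sum.reindex_bij_betw[OF bij_betw_nth[OF assms refl refl], of g] by simp

lemma edge_split:
  fixes h :: "nat \<times> nat \<Rightarrow> real"
  assumes sym: "sym E" and enum: "edge_enum E es"
  shows "(\<Sum>p\<in>E. h p) = (\<Sum>p\<in>set es. h p + h (prod.swap p))"
proof -
  have sub: "set es \<subseteq> E" using enum unfolding edge_enum_def by auto
  have EU: "E = set es \<union> prod.swap ` set es"
  proof
    show "E \<subseteq> set es \<union> prod.swap ` set es"
    proof
      fix p assume "p \<in> E"
      then obtain i j where p: "p = (i,j)" "(i,j) \<in> E" by (cases p) auto
      then have "(i,j) \<in> set es \<or> (j,i) \<in> set es" using enum unfolding edge_enum_def by blast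
      then show "p \<in> set es \<union> prod.swap ` set es" using p by (auto intro: image_eqI[of _ _ "(j,i)"])
    qed
    show "set es \<union> prod.swap ` set es \<subseteq> E" using sub sym by (auto dest: symD)
  qed
  have disj: "set es \<inter> prod.swap ` set es = {}"
    using enum unfolding edge_enum_def by fastforce
  have "(\<Sum>p\<in>E. h p) = (\<Sum>p\<in>set es. h p) + (\<Sum>p\<in>prod.swap ` set es. h p)"
    unfolding EU by (rule sum.union_disjoint) (use disj in auto)
  also have "(\<Sum>p\<in>prod.swap ` set es. h p) = (\<Sum>p\<in>set es. h (prod.swap p))"
    by (subst sum.reindex) (auto intro: inj_onI)
  finally show ?thesis by (simp add: sum.distrib)
qed

lemma sum_swap_E:
  fixes h :: "nat \<times> nat \<Rightarrow> real"
  assumes sym: "sym E"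
  shows "(\<Sum>p\<in>E. h (prod.swap p)) = (\<Sum>p\<in>E. h p)"
proof -
  have "prod.swap ` E = E" using sym by (auto dest: symD intro: image_eqI[of _ _ "prod.swap _"])
  then have "(\<Sum>p\<in>E. h p) = (\<Sum>p\<in>prod.swap ` E. h p)" by simp
  also have "\<dots> = (\<Sum>p\<in>E. h (prod.swap p))" by (subst sum.reindex) (auto intro: inj_onI)
  finally show ?thesis by simp
qed

lemma divmod_block: "k < (n::nat) \<Longrightarrow> (l*n+k) div n = l \<and> (l*n+k) mod n = k"
  by auto

lemma Pbar_apply:
  assumes l: "l < length es" and k: "k < n" and w: "w \<in> carrier_vec (length es * n)"
  shows "(Pbar n A es *\<^sub>v w) $ (l*n+k) =
         (\<Sum>k'<n. projP (A (fst (es!l)) (snd (es!l))) $$ (k,k') * w $ (l*n+k'))"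
proof -
  let ?L = "length es"
  let ?P = "\<lambda>l. projP (A (fst (es!l)) (snd (es!l)))"
  have r: "l*n+k < ?L*n"
  proof -
    have "l*n+k < l*n+n" using k by simp
    also have "\<dots> = Suc l * n" by simp
    also have "\<dots> \<le> ?L*n" using l by (intro mult_right_mono) auto
    finally show ?thesis .
  qed
  have "(Pbar n A es *\<^sub>v w) $ (l*n+k) = (\<Sum>c<?L*n. Pbar n A es $$ (l*n+k, c) * w $ c)"
    using r w unfolding Pbar_def by (simp add: scalar_prod_def atLeast0LessThan row_def)
  also have "\<dots> = (\<Sum>l'<?L. \<Sum>k'<n. Pbar n A es $$ (l*n+k, l'*n+k') * w $ (l'*n+k'))"
    by (rule sum_block)
  also have "\<dots> = (\<Sum>l'<?L. \<Sum>k'<n. (if l' = l then ?P l $$ (k,k') * w $ (l*n+k') else 0))"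
  proof (intro sum.cong refl)
    fix l' k' assume l': "l' \<in> {..<?L}" and k': "k' \<in> {..<n}"
    have r': "l'*n+k' < ?L*n"
    proof -
      have "l'*n+k' < l'*n+n" using k' by simp
      also have "\<dots> = Suc l' * n" by simp
      also have "\<dots> \<le> ?L*n" using l' by (intro mult_right_mono) auto
      finally show ?thesis .
    qed
    show "Pbar n A es $$ (l*n+k, l'*n+k') * w $ (l'*n+k') = (if l' = l then ?P l $$ (k,k') * w $ (l*n+k') else 0)"
      using r r' k k' unfolding Pbar_def by (auto simp: divmod_block)
  qed
  also have "\<dots> = (\<Sum>k'<n. ?P l $$ (k,k') * w $ (l*n+k'))"
    by (subst sum.swap) (simp add: l)
  finally show ?thesis .
qed

lemma Hbar_T_apply:
  assumes i: "i < m" and k: "k < n" and w: "w \<in> carrier_vec (length es * n)"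
  shows "(transpose_mat (Hbar n m es) *\<^sub>v w) $ (i*n+k) =
         (\<Sum>l<length es. (if i = fst (es!l) then 1 else if i = snd (es!l) then -1 else 0) * w $ (l*n+k))"
proof -
  let ?L = "length es"
  have r: "i*n+k < m*n"
  proof -
    have "i*n+k < i*n+n" using k by simp
    also have "\<dots> = Suc i * n" by simp
    also have "\<dots> \<le> m*n" using i by (intro mult_right_mono) auto
    finally show ?thesis .
  qed
  have "(transpose_mat (Hbar n m es) *\<^sub>v w) $ (i*n+k) = (\<Sum>c<?L*n. Hbar n m es $$ (c, i*n+k) * w $ c)"
    using r w unfolding Hbar_def by (simp add: scalar_prod_def atLeast0LessThan row_def)
  also have "\<dots> = (\<Sum>l<?L. \<Sum>k'<n. Hbar n m es $$ (l*n+k', i*n+k) * w $ (l*n+k'))"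
    by (rule sum_block)
  also have "\<dots> = (\<Sum>l<?L. \<Sum>k'<n. (if k' = k then (if i = fst (es!l) then 1 else if i = snd (es!l) then -1 else 0) * w $ (l*n+k) else 0))"
  proof (intro sum.cong refl)
    fix l k' assume l: "l \<in> {..<?L}" and k': "k' \<in> {..<n}"
    have r': "l*n+k' < ?L*n"
    proof -
      have "l*n+k' < l*n+n" using k' by simp
      also have "\<dots> = Suc l * n" by simp
      also have "\<dots> \<le> ?L*n" using l by (intro mult_right_mono) auto
      finally show ?thesis .
    qed
    show "Hbar n m es $$ (l*n+k', i*n+k) * w $ (l*n+k') = (if k' = k then (if i = fst (es!l) then 1 else if i = snd (es!l) then -1 else 0) * w $ (l*n+k) else 0)"
      using r r' k k' l i unfolding Hbar_def incH_def by (auto simp: divmod_block)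
  qed
  also have "\<dots> = (\<Sum>l<?L. (if i = fst (es!l) then 1 else if i = snd (es!l) then -1 else 0) * w $ (l*n+k))"
    using k by simp
  finally show ?thesis .
qed

lemma idx_lt: "l < L \<Longrightarrow> k < n \<Longrightarrow> l*n+k < L*(n::nat)"
proof -
  assume a: "l < L" "k < n"
  have "l*n+k < l*n+n" using a by simp
  also have "\<dots> = Suc l * n" by simp
  also have "\<dots> \<le> L*n" using a by (intro mult_right_mono) auto
  finally show ?thesis .
qed

lemma idx_split: "r < L*(n::nat) \<Longrightarrow> r div n < L \<and> r mod n < n \<and> r = (r div n)*n + r mod n"
  by (metis div_mult_mod_eq less_mult_imp_div_less mod_less_divisor mult_is_0 neq0_conv not_less0)

theorem corollary1:
  fixes m n :: nat
    and E :: "(nat \<times> nat) set"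
    and es :: "(nat \<times> nat) list"
    and A :: "nat \<Rightarrow> nat \<Rightarrow> real mat"
    and b :: "nat \<Rightarrow> nat \<Rightarrow> real vec"
    and d :: "nat \<Rightarrow> nat \<Rightarrow> nat"
    and x :: "nat \<Rightarrow> real \<Rightarrow> real vec"
  assumes graph: "connected_ugraph m E"
    and enum: "edge_enum E es"
    and A_dim: "\<And>i j. (i,j) \<in> E \<Longrightarrow> A i j \<in> carrier_mat (d i j) n"
    and A_rank: "\<And>i j. (i,j) \<in> E \<Longrightarrow> full_row_rank (A i j)"
    and b_dim: "\<And>i j. (i,j) \<in> E \<Longrightarrow> b i j \<in> carrier_vec (d i j)"
    and A_sym: "\<And>i j. (i,j) \<in> E \<Longrightarrow> A i j = A j i"
    and b_anti: "\<And>i j. (i,j) \<in> E \<Longrightarrow> b i j = - b j i"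
    and solvable: "\<exists>y. (\<forall>i<m. y i \<in> carrier_vec n) \<and>
                     (\<forall>(i,j) \<in> E. A i j *\<^sub>v (y i - y j) = b i j)"
    and kernel: "\<forall>v \<in> carrier_vec (length es * n).
                   (\<exists>z \<in> carrier_vec (length es * n). v = Pbar n A es *\<^sub>v z) \<and>
                   transpose_mat (Hbar n m es) *\<^sub>v v = 0\<^sub>v (m * n)
                   \<longrightarrow> v = 0\<^sub>v (length es * n)"
    and x_dim: "\<And>i t. i < m \<Longrightarrow> x i t \<in> carrier_vec n"
    and ode: "\<And>i t k. i < m \<Longrightarrow> t \<ge> 0 \<Longrightarrow> k < n \<Longrightarrow>
               ((\<lambda>s. x i s $ k) has_real_derivative
                  (- (\<Sum>j\<in>{j. (i,j) \<in> E}.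
                        (projP (A i j) *\<^sub>v (x i t - x j t - bbar (A i j) (b i j))) $ k)))
               (at t within {0..})"
  shows "\<exists>xs. (\<forall>i<m. xs i \<in> carrier_vec n \<and>
               (\<exists>C \<alpha>. \<alpha> > 0 \<and> (\<forall>t\<ge>0. vnorm (x i t - xs i) \<le> C * exp (- \<alpha> * t)))) \<and>
             (\<forall>(i,j) \<in> E. A i j *\<^sub>v (xs i - xs j) = b i j)"
proof -
  have Esub: "E \<subseteq> {0..<m} \<times> {0..<m}" and symE: "sym E" and irr: "\<And>i. (i,i) \<notin> E"
    using graph unfolding connected_ugraph_def by auto
  have finE: "finite E" using Esub finite_subset by blast
  define NB where "NB i = {j. (i,j) \<in> E}" for i
  have Em: "i < m" "j < m" if "(i,j) \<in> E" for i j using that Esub by auto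
  have finNB: "finite (NB i)" for i
    by (rule finite_subset[of _ "{0..<m}"]) (auto simp: NB_def dest: Em)
  have Esw: "(j,i) \<in> E" if "(i,j) \<in> E" for i j using symE that by (auto dest: symD)
  define Pm where "Pm i j = projP (A i j)" for i j
  define bb where "bb i j = bbar (A i j) (b i j)" for i j
  note pf = proj_facts[OF A_dim A_rank]
  have Pc: "Pm i j \<in> carrier_mat n n" if "(i,j) \<in> E" for i j
    using pf(1)[OF that that] unfolding Pm_def .
  have PP: "Pm i j * Pm i j = Pm i j" if "(i,j) \<in> E" for i j
    using pf(2)[OF that that] unfolding Pm_def .
  have PT: "transpose_mat (Pm i j) = Pm i j" if "(i,j) \<in> E" for i j
    using pf(3)[OF that that] unfolding Pm_def .
  have APm: "A i j * Pm i j = A i j" if "(i,j) \<in> E" for i j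
    using pf(4)[OF that that] unfolding Pm_def .
  have Abb: "A i j *\<^sub>v bb i j = b i j" if "(i,j) \<in> E" for i j
    using pf(5)[OF that that b_dim[OF that]] unfolding bb_def .
  have Psw: "Pm j i = Pm i j" if "(i,j) \<in> E" for i j
    unfolding Pm_def using A_sym[OF that] by simp
  have bbsw: "bb j i = - bb i j" if "(i,j) \<in> E" for i j
  proof -
    have "b j i = - b i j" using b_anti[OF Esw[OF that]] .
    then show ?thesis unfolding bb_def using A_sym[OF that] pf(6)[OF that that b_dim[OF that]] by simp
  qed
  have bbc: "bb i j \<in> carrier_vec n" if "(i,j) \<in> E" for i j
    unfolding bb_def bbar_def carrier_vec_def using A_dim[OF that] by auto
  have Psym: "Pm i j $$ (k,k') = Pm i j $$ (k',k)" if "(i,j) \<in> E" "k < n" "k' < n" for i j k k'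
    using arg_cong[OF PT[OF that(1)], of "\<lambda>M. M $$ (k',k)"] that Pc[OF that(1)] by simp
  have Pidem: "(\<Sum>k'<n. Pm i j $$ (k,k') * Pm i j $$ (k',k'')) = Pm i j $$ (k,k'')"
    if "(i,j) \<in> E" "k < n" "k'' < n" for i j k k''
    using arg_cong[OF PP[OF that(1)], of "\<lambda>M. M $$ (k,k'')"] that Pc[OF that(1)]
    by (simp add: scalar_prod_def row_def col_def atLeast0LessThan)
  define u where "u i j k t = (\<Sum>k'<n. Pm i j $$ (k,k') * (x i t $ k' - x j t $ k' - bb i j $ k'))"
    for i j k t
  have u_eq: "(projP (A i j) *\<^sub>v (x i t - x j t - bbar (A i j) (b i j))) $ k = u i j k t"
    if "(i,j) \<in> E" "k < n" for i j k t
    using that Pc[OF that(1)] x_dim[OF Em(1)[OF that(1)], of t] x_dim[OF Em(2)[OF that(1)], of t] bbc[OF that(1)]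
    unfolding u_def Pm_def[symmetric] bb_def[symmetric]
    by (simp add: scalar_prod_def row_def atLeast0LessThan)
  define D where "D i k t = - (\<Sum>j\<in>NB i. u i j k t)" for i k t
  have ode': "((\<lambda>s. x i s $ k) has_real_derivative D i k t) (at t within {0..})"
    if "i < m" "0 \<le> t" "k < n" for i k t
  proof -
    have "(\<Sum>j\<in>{j. (i,j) \<in> E}. (projP (A i j) *\<^sub>v (x i t - x j t - bbar (A i j) (b i j))) $ k)
        = (\<Sum>j\<in>NB i. u i j k t)"
      unfolding NB_def by (rule sum.cong) (use u_eq that in auto)
    then show ?thesis using ode[OF that] unfolding D_def by simp
  qed
  have u_anti: "u j i k t = - u i j k t" if "(i,j) \<in> E" for i j k t
    unfolding u_def Psw[OF that] bbsw[OF that]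
    using bbc[OF that] by (simp add: sum_negf[symmetric] algebra_simps)
  have u_proj: "(\<Sum>k'<n. Pm i j $$ (k,k') * u i j k' t) = u i j k t"
    if "(i,j) \<in> E" "k < n" for i j k t
  proof -
    have "(\<Sum>k'<n. Pm i j $$ (k,k') * u i j k' t) =
          (\<Sum>k'<n. \<Sum>k''<n. Pm i j $$ (k,k') * Pm i j $$ (k',k'') * (x i t $ k'' - x j t $ k'' - bb i j $ k''))"
      unfolding u_def by (simp add: sum_distrib_left mult.assoc)
    also have "\<dots> = (\<Sum>k''<n. (\<Sum>k'<n. Pm i j $$ (k,k') * Pm i j $$ (k',k'')) * (x i t $ k'' - x j t $ k'' - bb i j $ k''))"
      by (subst sum.swap) (simp add: sum_distrib_right)
    also have "\<dots> = u i j k t" unfolding u_def using Pidem that by simp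
    finally show ?thesis .
  qed
  have u_der: "((\<lambda>s. u i j k s) has_real_derivative
        (\<Sum>k'<n. Pm i j $$ (k,k') * (D i k' t - D j k' t))) (at t within {0..})"
    if "(i,j) \<in> E" "0 \<le> t" for i j k t
  proof -
    have "((\<lambda>s. \<Sum>k'<n. Pm i j $$ (k,k') * (x i s $ k' - x j s $ k' - bb i j $ k')) has_real_derivative
        (\<Sum>k'<n. Pm i j $$ (k,k') * (D i k' t - D j k' t - 0))) (at t within {0..})"
      by (intro DERIV_sum DERIV_cmult DERIV_diff ode' DERIV_const) (use that Em in auto)
    then show ?thesis unfolding u_def by simp
  qed
  have ESig: "E = Sigma {..<m} NB" unfolding NB_def using Em by auto
  have sumE: "(\<Sum>p\<in>E. F p) = (\<Sum>i<m. \<Sum>j\<in>NB i. F (i,j))" for F :: "nat \<times> nat \<Rightarrow> real"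
    unfolding ESig by (subst sum.Sigma) (auto simp: finNB)
  define V where "V t = (\<Sum>p\<in>E. \<Sum>k<n. u (fst p) (snd p) k t * u (fst p) (snd p) k t)" for t
  define W where "W t = (\<Sum>i<m. \<Sum>k<n. D i k t * D i k t)" for t
  have V_der: "(V has_real_derivative (- 4 * W t)) (at t within {0..})" if t: "0 \<le> t" for t
  proof -
    define du where "du i j k = (\<Sum>k'<n. Pm i j $$ (k,k') * (D i k' t - D j k' t))" for i j k
    have "(V has_real_derivative (\<Sum>p\<in>E. \<Sum>k<n. du (fst p) (snd p) k * u (fst p) (snd p) k t
            + u (fst p) (snd p) k t * du (fst p) (snd p) k)) (at t within {0..})"
      unfolding V_def
    proof (intro DERIV_sum)
      fix p k assume p: "p \<in> E"
      have ud: "((\<lambda>s. u (fst p) (snd p) k s) has_real_derivative du (fst p) (snd p) k) (at t within {0..})"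
        unfolding du_def using u_der[of "fst p" "snd p" t k] p t by simp
      show "((\<lambda>s. u (fst p) (snd p) k s * u (fst p) (snd p) k s) has_real_derivative
          du (fst p) (snd p) k * u (fst p) (snd p) k t + u (fst p) (snd p) k t * du (fst p) (snd p) k) (at t within {0..})"
        using DERIV_mult'[OF ud ud] by (simp add: add.commute)
    qed
    moreover have "(\<Sum>p\<in>E. \<Sum>k<n. du (fst p) (snd p) k * u (fst p) (snd p) k t
            + u (fst p) (snd p) k t * du (fst p) (snd p) k) = - 4 * W t"
    proof -
      have inner: "(\<Sum>k<n. u i j k t * du i j k) = (\<Sum>k<n. u i j k t * (D i k t - D j k t))"
        if ij: "(i,j) \<in> E" for i j
      proof -
        have "(\<Sum>k<n. u i j k t * du i j k) =
              (\<Sum>k<n. \<Sum>k'<n. u i j k t * Pm i j $$ (k,k') * (D i k' t - D j k' t))"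
          unfolding du_def by (simp add: sum_distrib_left mult.assoc)
        also have "\<dots> = (\<Sum>k'<n. (\<Sum>k<n. Pm i j $$ (k',k) * u i j k t) * (D i k' t - D j k' t))"
          by (subst sum.swap) (auto simp: sum_distrib_right Psym[OF ij] intro!: sum.cong)
        also have "\<dots> = (\<Sum>k'<n. u i j k' t * (D i k' t - D j k' t))"
          using u_proj[OF ij] by simp
        finally show ?thesis .
      qed
      have "(\<Sum>p\<in>E. \<Sum>k<n. du (fst p) (snd p) k * u (fst p) (snd p) k t
            + u (fst p) (snd p) k t * du (fst p) (snd p) k)
          = (\<Sum>p\<in>E. 2 * (\<Sum>k<n. u (fst p) (snd p) k t * D (fst p) k t)
                   - 2 * (\<Sum>k<n. u (fst p) (snd p) k t * D (snd p) k t))"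
      proof (rule sum.cong[OF refl])
        fix p assume p: "p \<in> E"
        obtain i j where pij: "p = (i,j)" by (cases p)
        have "(\<Sum>k<n. du i j k * u i j k t + u i j k t * du i j k) = 2 * (\<Sum>k<n. u i j k t * du i j k)"
          by (simp add: sum_distrib_left sum.distrib algebra_simps)
        also have "\<dots> = 2 * (\<Sum>k<n. u i j k t * D i k t) - 2 * (\<Sum>k<n. u i j k t * D j k t)"
          using inner[of i j] p pij by (simp add: algebra_simps sum_subtractf)
        finally show "(\<Sum>k<n. du (fst p) (snd p) k * u (fst p) (snd p) k t
            + u (fst p) (snd p) k t * du (fst p) (snd p) k)
          = 2 * (\<Sum>k<n. u (fst p) (snd p) k t * D (fst p) k t)
                   - 2 * (\<Sum>k<n. u (fst p) (snd p) k t * D (snd p) k t)" using pij by simp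
      qed
      also have "\<dots> = 2 * (\<Sum>p\<in>E. \<Sum>k<n. u (fst p) (snd p) k t * D (fst p) k t)
                   - 2 * (\<Sum>p\<in>E. \<Sum>k<n. u (fst p) (snd p) k t * D (snd p) k t)"
        by (simp add: sum_subtractf sum_distrib_left)
      also have "(\<Sum>p\<in>E. \<Sum>k<n. u (fst p) (snd p) k t * D (snd p) k t)
               = - (\<Sum>p\<in>E. \<Sum>k<n. u (fst p) (snd p) k t * D (fst p) k t)"
      proof -
        have "(\<Sum>p\<in>E. \<Sum>k<n. u (fst p) (snd p) k t * D (snd p) k t)
            = (\<Sum>p\<in>E. (\<lambda>q. \<Sum>k<n. u (snd q) (fst q) k t * D (fst q) k t) (prod.swap p))"
          by simp
        also have "\<dots> = (\<Sum>p\<in>E. \<Sum>k<n. u (snd p) (fst p) k t * D (fst p) k t)"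
          by (rule sum_swap_E[OF symE])
        also have "\<dots> = (\<Sum>p\<in>E. - (\<Sum>k<n. u (fst p) (snd p) k t * D (fst p) k t))"
          by (rule sum.cong[OF refl]) (auto simp: u_anti sum_negf)
        finally show ?thesis by (simp add: sum_negf)
      qed
      also have "(\<Sum>p\<in>E. \<Sum>k<n. u (fst p) (snd p) k t * D (fst p) k t) = - W t"
      proof -
        have "(\<Sum>p\<in>E. \<Sum>k<n. u (fst p) (snd p) k t * D (fst p) k t)
            = (\<Sum>i<m. \<Sum>j\<in>NB i. \<Sum>k<n. u i j k t * D i k t)"
          using sumE[of "\<lambda>p. \<Sum>k<n. u (fst p) (snd p) k t * D (fst p) k t"] by simp
        also have "\<dots> = (\<Sum>i<m. \<Sum>k<n. (\<Sum>j\<in>NB i. u i j k t) * D i k t)"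
          by (subst sum.swap) (simp add: sum_distrib_right)
        also have "\<dots> = - W t" unfolding W_def D_def by (simp add: sum_negf)
        finally show ?thesis .
      qed
      finally show ?thesis by simp
    qed
    ultimately show ?thesis by simp
  qed
  define L where "L = length es"
  define Ht where "Ht = transpose_mat (Hbar n m es)"
  define Pb where "Pb = Pbar n A es"
  have Htc: "Ht \<in> carrier_mat (m*n) (L*n)" unfolding Ht_def Hbar_def L_def by auto
  have Pbc: "Pb \<in> carrier_mat (L*n) (L*n)" unfolding Pb_def Pbar_def L_def by auto
  obtain C where C0: "C > 0"
    and Cb: "\<forall>w\<in>carrier_vec (L*n). Pb *\<^sub>v w = w \<longrightarrow> w \<bullet> w \<le> C * ((Ht *\<^sub>v w) \<bullet> (Ht *\<^sub>v w))"
    using coercive[OF Htc Pbc kernel[folded L_def Ht_def Pb_def]] by blast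
  define K where "K = (\<Sum>i<m*n. (\<Sum>j<L*n. \<bar>Ht $$ (i,j)\<bar>)^2)"
  have K0: "0 \<le> K" unfolding K_def by (auto intro: sum_nonneg)
  have distinct_es: "distinct es" and set_es: "set es \<subseteq> E"
    using enum unfolding edge_enum_def by auto
  have esE: "es ! l \<in> E" if "l < L" for l using that set_es unfolding L_def by auto
  have es_irr: "fst p \<noteq> snd p" if "p \<in> set es" for p
  proof -
    have "p \<in> E" using that set_es by auto
    then show ?thesis using irr by (metis prod.collapse)
  qed
  have VW: "V t \<le> 2 * C * W t \<and> W t \<le> K / 2 * V t" for t
  proof -
    define Uv where "Uv = vec (L*n) (\<lambda>r. u (fst (es!(r div n))) (snd (es!(r div n))) (r mod n) t)"
    have Uvc: "Uv \<in> carrier_vec (L*n)" unfolding Uv_def by simp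
    have Uv_idx: "Uv $ (l*n+k) = u (fst (es!l)) (snd (es!l)) k t" if "l < L" "k < n" for l k
      unfolding Uv_def using idx_lt[OF that] that by simp
    have PU: "Pb *\<^sub>v Uv = Uv"
    proof (rule eq_vecI)
      show "dim_vec (Pb *\<^sub>v Uv) = dim_vec Uv" using Pbc Uvc by simp
      fix r assume "r < dim_vec Uv"
      then have r: "r < L*n" using Uvc by simp
      define l where "l = r div n"
      define k where "k = r mod n"
      have lk: "l < L" "k < n" "r = l*n+k" using idx_split[OF r] unfolding l_def k_def by auto
      have "(Pb *\<^sub>v Uv) $ (l*n+k) = (\<Sum>k'<n. Pm (fst (es!l)) (snd (es!l)) $$ (k,k') * Uv $ (l*n+k'))"
        unfolding Pb_def Pm_def by (rule Pbar_apply) (use lk Uvc in \<open>auto simp: L_def\<close>)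
      also have "\<dots> = (\<Sum>k'<n. Pm (fst (es!l)) (snd (es!l)) $$ (k,k') * u (fst (es!l)) (snd (es!l)) k' t)"
        using Uv_idx lk by simp
      also have "\<dots> = u (fst (es!l)) (snd (es!l)) k t"
        using u_proj[of "fst (es!l)" "snd (es!l)" k t] esE[OF lk(1)] lk by simp
      also have "\<dots> = Uv $ (l*n+k)" using Uv_idx lk by simp
      finally show "(Pb *\<^sub>v Uv) $ r = Uv $ r" using lk by simp
    qed
    have HU: "(Ht *\<^sub>v Uv) $ (i*n+k) = - D i k t" if ik: "i < m" "k < n" for i k
    proof -
      define g where "g p = (if i = fst p then 1 else if i = snd p then -1 else 0) * u (fst p) (snd p) k t" for p
      define h where "h p = (if fst p = i then u (fst p) (snd p) k t else 0)" for p
      have "(Ht *\<^sub>v Uv) $ (i*n+k) = (\<Sum>l<L. (if i = fst (es!l) then 1 else if i = snd (es!l) then -1 else 0) * Uv $ (l*n+k))"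
        unfolding Ht_def L_def by (rule Hbar_T_apply) (use ik Uvc in \<open>auto simp: L_def\<close>)
      also have "\<dots> = (\<Sum>l<L. g (es!l))" unfolding g_def using Uv_idx ik by simp
      also have "\<dots> = (\<Sum>p\<in>set es. g p)" unfolding L_def by (rule sum_nth_set[OF distinct_es])
      also have "\<dots> = (\<Sum>p\<in>set es. h p + h (prod.swap p))"
      proof (rule sum.cong[OF refl])
        fix p assume p: "p \<in> set es"
        then have pE: "p \<in> E" using set_es by auto
        obtain a c where pac: "p = (a,c)" by (cases p)
        have "a \<noteq> c" using es_irr[OF p] pac by simp
        then show "g p = h p + h (prod.swap p)"
          unfolding g_def h_def pac using u_anti[of a c k t] pE pac by auto
      qed
      also have "\<dots> = (\<Sum>p\<in>E. h p)" by (rule edge_split[OF symE enum, symmetric])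
      also have "\<dots> = (\<Sum>i'<m. \<Sum>j\<in>NB i'. h (i',j))" by (rule sumE)
      also have "\<dots> = (\<Sum>i'<m. if i' = i then (\<Sum>j\<in>NB i'. u i' j k t) else 0)"
        unfolding h_def by (intro sum.cong refl) auto
      also have "\<dots> = (\<Sum>j\<in>NB i. u i j k t)" using ik by (subst sum.delta) auto
      also have "\<dots> = - D i k t" unfolding D_def by simp
      finally show ?thesis .
    qed
    have HH: "(Ht *\<^sub>v Uv) \<bullet> (Ht *\<^sub>v Uv) = W t"
    proof -
      have "(Ht *\<^sub>v Uv) \<bullet> (Ht *\<^sub>v Uv) = (\<Sum>r<m*n. (Ht *\<^sub>v Uv) $ r * (Ht *\<^sub>v Uv) $ r)"
        using Htc by (simp add: scalar_prod_def atLeast0LessThan)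
      also have "\<dots> = (\<Sum>i<m. \<Sum>k<n. (Ht *\<^sub>v Uv) $ (i*n+k) * (Ht *\<^sub>v Uv) $ (i*n+k))"
        by (rule sum_block)
      also have "\<dots> = W t" unfolding W_def using HU by simp
      finally show ?thesis .
    qed
    define q where "q p = (\<Sum>k<n. u (fst p) (snd p) k t * u (fst p) (snd p) k t)" for p
    have UU: "Uv \<bullet> Uv = (\<Sum>p\<in>set es. q p)"
    proof -
      have "Uv \<bullet> Uv = (\<Sum>r<L*n. Uv $ r * Uv $ r)"
        using Uvc by (simp add: scalar_prod_def atLeast0LessThan)
      also have "\<dots> = (\<Sum>l<L. \<Sum>k<n. Uv $ (l*n+k) * Uv $ (l*n+k))"
        by (rule sum_block)
      also have "\<dots> = (\<Sum>l<L. q (es!l))" unfolding q_def using Uv_idx by simp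
      also have "\<dots> = (\<Sum>p\<in>set es. q p)" unfolding L_def by (rule sum_nth_set[OF distinct_es])
      finally show ?thesis .
    qed
    have VU: "V t = 2 * (Uv \<bullet> Uv)"
    proof -
      have "V t = (\<Sum>p\<in>E. q p)" unfolding V_def q_def ..
      also have "\<dots> = (\<Sum>p\<in>set es. q p + q (prod.swap p))" by (rule edge_split[OF symE enum])
      also have "\<dots> = (\<Sum>p\<in>set es. 2 * q p)"
      proof (rule sum.cong[OF refl])
        fix p assume p: "p \<in> set es"
        then have pE: "p \<in> E" using set_es by auto
        obtain a c where pac: "p = (a,c)" by (cases p)
        show "q p + q (prod.swap p) = 2 * q p"
          unfolding q_def pac using u_anti[of a c _ t] pE pac by simp
      qed
      finally show ?thesis using UU by (simp add: sum_distrib_left)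
    qed
    have "Uv \<bullet> Uv \<le> C * W t" using Cb Uvc PU HH by auto
    moreover have "W t \<le> K * (Uv \<bullet> Uv)"
      using frob_bound[OF Htc Uvc] HH unfolding K_def by simp
    ultimately show ?thesis using VU by simp
  qed
  have Vnn: "0 \<le> V t" for t unfolding V_def by (auto intro!: sum_nonneg)
  define \<gamma> where "\<gamma> = 2 / C"
  have \<gamma>0: "\<gamma> > 0" using C0 by (simp add: \<gamma>_def)
  have Vdecay: "V t \<le> V 0 * exp (- \<gamma> * t)" if t: "0 \<le> t" for t
  proof -
    define \<phi> where "\<phi> s = V s * exp (\<gamma> * s)" for s
    have ed: "((\<lambda>s. exp (\<gamma> * s)) has_real_derivative exp (\<gamma> * s) * \<gamma>) (at s within {0..})" for s
      by (auto intro!: derivative_eq_intros)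
    have \<phi>d: "(\<phi> has_real_derivative ((- 4 * W s) * exp (\<gamma> * s) + (exp (\<gamma> * s) * \<gamma>) * V s)) (at s within {0..})"
      if "0 \<le> s" for s
      unfolding \<phi>_def by (rule DERIV_mult[OF V_der[OF that] ed])
    have nonpos: "(- 4 * W s) * exp (\<gamma> * s) + (exp (\<gamma> * s) * \<gamma>) * V s \<le> 0" for s
    proof -
      have "\<gamma> * V s \<le> 4 * W s" using VW[of s] C0 unfolding \<gamma>_def by (simp add: field_simps)
      then have "exp (\<gamma> * s) * (\<gamma> * V s) \<le> exp (\<gamma> * s) * (4 * W s)" by (intro mult_left_mono) auto
      then show ?thesis by (simp add: algebra_simps)
    qed
    have "\<phi> t \<le> \<phi> 0" by (rule deriv_nonpos_mono[OF \<phi>d nonpos]) (use t in auto)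
    then have "V t * exp (\<gamma> * t) \<le> V 0" unfolding \<phi>_def by simp
    then have "V t * exp (\<gamma> * t) * exp (- \<gamma> * t) \<le> V 0 * exp (- \<gamma> * t)" by (intro mult_right_mono) auto
    then show ?thesis by (simp add: mult.assoc exp_add[symmetric])
  qed
  define \<beta> where "\<beta> = \<gamma> / 2"
  have \<beta>0: "\<beta> > 0" using \<gamma>0 unfolding \<beta>_def by simp
  have eg: "exp (- \<gamma> * t) = (exp (- \<beta> * t))^2" for t
    unfolding \<beta>_def power2_eq_square exp_add[symmetric] by simp
  define G where "G = sqrt (K / 2 * V 0)"
  have G0: "0 \<le> G" unfolding G_def using K0 Vnn[of 0] by simp
  have GG: "G^2 = K / 2 * V 0" unfolding G_def using K0 Vnn[of 0] by simp
  have Dbound: "\<bar>D i k t\<bar> \<le> G * exp (- \<beta> * t)" if ik: "i < m" "k < n" and t: "0 \<le> t" for i k t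
  proof -
    have "D i k t * D i k t \<le> (\<Sum>k<n. D i k t * D i k t)"
      by (rule member_le_sum) (use ik in auto)
    also have "\<dots> \<le> W t" unfolding W_def
      by (rule member_le_sum[where f = "\<lambda>i. \<Sum>k<n. D i k t * D i k t"]) (use ik in \<open>auto intro!: sum_nonneg\<close>)
    also have "\<dots> \<le> K / 2 * V t" using VW by blast
    also have "\<dots> \<le> K / 2 * (V 0 * exp (- \<gamma> * t))" using Vdecay[OF t] K0 by (intro mult_left_mono) auto
    also have "\<dots> = (G * exp (- \<beta> * t))^2" unfolding eg power_mult_distrib GG by simp
    finally have "\<bar>D i k t\<bar>^2 \<le> (G * exp (- \<beta> * t))^2" by (simp add: power2_eq_square)
    then show ?thesis by (rule power2_le_imp_le) (use G0 in simp)
  qed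
  have "\<forall>ik. \<exists>Lv. fst ik < m \<longrightarrow> snd ik < n \<longrightarrow>
          (\<forall>t\<ge>0. \<bar>x (fst ik) t $ (snd ik) - Lv\<bar> \<le> (G / \<beta>) * exp (- \<beta> * t))"
  proof
    fix ik :: "nat \<times> nat"
    show "\<exists>Lv. fst ik < m \<longrightarrow> snd ik < n \<longrightarrow>
          (\<forall>t\<ge>0. \<bar>x (fst ik) t $ (snd ik) - Lv\<bar> \<le> (G / \<beta>) * exp (- \<beta> * t))"
    proof (cases "fst ik < m \<and> snd ik < n")
      case True
      then show ?thesis
        using exp_decay_limit[OF ode'[of "fst ik" _ "snd ik"] Dbound[of "fst ik" "snd ik"] \<beta>0] by auto
    qed auto
  qed
  then obtain Lf0 where Lf0: "\<And>ik. fst ik < m \<Longrightarrow> snd ik < n \<Longrightarrow>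
          (\<forall>t\<ge>0. \<bar>x (fst ik) t $ (snd ik) - Lf0 ik\<bar> \<le> (G / \<beta>) * exp (- \<beta> * t))"
    by metis
  define c where "c = G / \<beta>"
  have c0: "0 \<le> c" unfolding c_def using G0 \<beta>0 by simp
  define xs where "xs i = vec n (\<lambda>k. Lf0 (i,k))" for i
  have xsc: "xs i \<in> carrier_vec n" for i unfolding xs_def by simp
  have Lb: "\<bar>x i t $ k - xs i $ k\<bar> \<le> c * exp (- \<beta> * t)" if "i < m" "k < n" "0 \<le> t" for i k t
    using Lf0[of "(i,k)"] that unfolding xs_def c_def by simp
  show ?thesis
  proof (intro exI[of _ xs] conjI allI impI ballI)
    fix i assume i: "i < m"
    show "xs i \<in> carrier_vec n" by (rule xsc)
    show "\<exists>C \<alpha>. \<alpha> > 0 \<and> (\<forall>t\<ge>0. vnorm (x i t - xs i) \<le> C * exp (- \<alpha> * t))"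
    proof (rule exI[of _ "sqrt (real n) * c"], rule exI[of _ \<beta>], intro conjI allI impI)
      show "\<beta> > 0" by (rule \<beta>0)
      fix t :: real assume t: "0 \<le> t"
      have "(\<Sum>k<n. ((x i t - xs i) $ k)^2) \<le> (\<Sum>k<n. (c * exp (- \<beta> * t))^2)"
      proof (rule sum_mono)
        fix k assume k: "k \<in> {..<n}"
        have "(x i t - xs i) $ k = x i t $ k - xs i $ k" using k x_dim[OF i, of t] xsc[of i] by simp
        then have "\<bar>(x i t - xs i) $ k\<bar> \<le> c * exp (- \<beta> * t)" using Lb[of i k t] i k t by simp
        then have "\<bar>(x i t - xs i) $ k\<bar>^2 \<le> (c * exp (- \<beta> * t))^2" by (intro power_mono) auto
        then show "((x i t - xs i) $ k)^2 \<le> (c * exp (- \<beta> * t))^2" by simp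
      qed
      also have "\<dots> = (sqrt (real n) * c * exp (- \<beta> * t))^2"
        by (simp add: power_mult_distrib)
      finally have "sqrt (\<Sum>k<n. ((x i t - xs i) $ k)^2) \<le> sqrt ((sqrt (real n) * c * exp (- \<beta> * t))^2)"
        by (rule real_sqrt_le_mono)
      also have "\<dots> = sqrt (real n) * c * exp (- \<beta> * t)" using c0 by simp
      finally have fin: "sqrt (\<Sum>k<n. ((x i t - xs i) $ k)^2) \<le> sqrt (real n) * c * exp (- \<beta> * t)" .
      have dv: "dim_vec (x i t - xs i) = n" using xsc[of i] by simp
      show "vnorm (x i t - xs i) \<le> sqrt (real n) * c * exp (- \<beta> * t)"
        unfolding vnorm_def dv by (rule fin)
    qed
  next
    fix p assume p: "p \<in> E"
    obtain i j where pij: "p = (i,j)" by (cases p)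
    have ij: "(i,j) \<in> E" using p pij by simp
    have im: "i < m" and jm: "j < m" using Em[OF ij] by auto
    define w where "w = xs i - xs j - bb i j"
    have wc: "w \<in> carrier_vec n" unfolding w_def using xsc bbc[OF ij] by simp
    have Pw: "Pm i j *\<^sub>v w = 0\<^sub>v n"
    proof (rule eq_vecI)
      show "dim_vec (Pm i j *\<^sub>v w) = dim_vec (0\<^sub>v n)" using Pc[OF ij] by simp
      fix k assume "k < dim_vec (0\<^sub>v n)"
      then have k: "k < n" by simp
      define z where "z = (\<Sum>k'<n. Pm i j $$ (k,k') * (xs i $ k' - xs j $ k' - bb i j $ k'))"
      have zeq: "(Pm i j *\<^sub>v w) $ k = z"
        unfolding z_def w_def using k Pc[OF ij] xsc[of i] xsc[of j] bbc[OF ij]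
        by (simp add: scalar_prod_def row_def atLeast0LessThan)
      define S where "S = (\<Sum>k'<n. \<bar>Pm i j $$ (k,k')\<bar>)"
      have "\<bar>z\<bar> \<le> (sqrt (V 0) + 2 * c * S) * exp (- \<beta> * t)" if t: "0 \<le> t" for t
      proof -
        have "u i j k t * u i j k t \<le> (\<Sum>k<n. u i j k t * u i j k t)"
          by (rule member_le_sum) (use k in auto)
        also have "\<dots> \<le> V t" unfolding V_def
          by (rule member_le_sum[where f = "\<lambda>p. \<Sum>k<n. u (fst p) (snd p) k t * u (fst p) (snd p) k t", 
                of "(i,j)", simplified]) (use ij finE in \<open>auto intro!: sum_nonneg\<close>)
        also have "\<dots> \<le> V 0 * exp (- \<gamma> * t)" by (rule Vdecay[OF t])
        also have "\<dots> = (sqrt (V 0) * exp (- \<beta> * t))^2" unfolding eg power_mult_distrib using Vnn[of 0] by simp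
        finally have "\<bar>u i j k t\<bar>^2 \<le> (sqrt (V 0) * exp (- \<beta> * t))^2" by (simp add: power2_eq_square)
        then have ub: "\<bar>u i j k t\<bar> \<le> sqrt (V 0) * exp (- \<beta> * t)"
          by (rule power2_le_imp_le) (use Vnn[of 0] in simp)
        have "z - u i j k t = (\<Sum>k'<n. Pm i j $$ (k,k') * ((xs i $ k' - x i t $ k') - (xs j $ k' - x j t $ k')))"
          unfolding z_def u_def by (simp add: sum_subtractf[symmetric] algebra_simps)
        then have "\<bar>z - u i j k t\<bar> \<le> (\<Sum>k'<n. \<bar>Pm i j $$ (k,k')\<bar> * (2 * c * exp (- \<beta> * t)))"
        proof -
          assume eq: "z - u i j k t = (\<Sum>k'<n. Pm i j $$ (k,k') * ((xs i $ k' - x i t $ k') - (xs j $ k' - x j t $ k')))"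
          have "\<bar>z - u i j k t\<bar> \<le> (\<Sum>k'<n. \<bar>Pm i j $$ (k,k') * ((xs i $ k' - x i t $ k') - (xs j $ k' - x j t $ k'))\<bar>)"
            unfolding eq by (rule sum_abs)
          also have "\<dots> \<le> (\<Sum>k'<n. \<bar>Pm i j $$ (k,k')\<bar> * (2 * c * exp (- \<beta> * t)))"
          proof (rule sum_mono)
            fix k' assume k': "k' \<in> {..<n}"
            have "\<bar>(xs i $ k' - x i t $ k') - (xs j $ k' - x j t $ k')\<bar> \<le> 2 * c * exp (- \<beta> * t)"
              using Lb[OF im _ t, of k'] Lb[OF jm _ t, of k'] k' by (simp add: abs_le_iff)
            then show "\<bar>Pm i j $$ (k,k') * ((xs i $ k' - x i t $ k') - (xs j $ k' - x j t $ k'))\<bar>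
                \<le> \<bar>Pm i j $$ (k,k')\<bar> * (2 * c * exp (- \<beta> * t))"
              unfolding abs_mult by (intro mult_left_mono) auto
          qed
          finally show ?thesis .
        qed
        also have "\<dots> = 2 * c * S * exp (- \<beta> * t)" unfolding S_def by (simp add: sum_distrib_right[symmetric] mult.commute)
        finally have "\<bar>z - u i j k t\<bar> \<le> 2 * c * S * exp (- \<beta> * t)" .
        then show ?thesis using ub by (simp add: algebra_simps abs_le_iff)
      qed
      then have "z = 0" by (intro decay_zero[OF _ \<beta>0])
      then show "(Pm i j *\<^sub>v w) $ k = 0\<^sub>v n $ k" using zeq k by simp
    qed
    have "A i j *\<^sub>v w = (A i j * Pm i j) *\<^sub>v w" using APm[OF ij] by simp
    also have "\<dots> = A i j *\<^sub>v (Pm i j *\<^sub>v w)" using A_dim[OF ij] Pc[OF ij] wc by (intro assoc_mult_mat_vec) auto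
    also have "\<dots> = 0\<^sub>v (d i j)" unfolding Pw using A_dim[OF ij] by simp
    finally have Aw: "A i j *\<^sub>v w = 0\<^sub>v (d i j)" .
    have "A i j *\<^sub>v w = A i j *\<^sub>v (xs i - xs j) - A i j *\<^sub>v bb i j"
      unfolding w_def using A_dim[OF ij] xsc bbc[OF ij] by (intro mult_minus_distrib_mat_vec) auto
    then have "A i j *\<^sub>v (xs i - xs j) - b i j = 0\<^sub>v (d i j)" using Aw Abb[OF ij] by simp
    then have "A i j *\<^sub>v (xs i - xs j) = b i j"
    proof -
      assume h: "A i j *\<^sub>v (xs i - xs j) - b i j = 0\<^sub>v (d i j)"
      show ?thesis
      proof (rule eq_vecI)
        show "dim_vec (A i j *\<^sub>v (xs i - xs j)) = dim_vec (b i j)" using A_dim[OF ij] b_dim[OF ij] by simp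
        fix r assume "r < dim_vec (b i j)"
        then have r: "r < d i j" using b_dim[OF ij] by simp
        show "(A i j *\<^sub>v (xs i - xs j)) $ r = b i j $ r"
          using arg_cong[OF h, of "\<lambda>v. v $ r"] r b_dim[OF ij] A_dim[OF ij] by simp
      qed
    qed
    then show "case p of (i, j) \<Rightarrow> A i j *\<^sub>v (xs i - xs j) = b i j" using pij by simp
  qed
qed

end
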